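(* Let $d\ge3$ and $z\in[0,1)$. Then, as operators on $C(\mathbb S^{d-1})$, $$\mathcal U_z=\mathcal N_z\,\mathcal F\,\mathcal M_z,$$ where $\mathcal F=\mathcal U_0$ is the Funk--Radon transform.
   Context: $\mathbb S^{d-1}\subset\mathbb R^d$ is the unit sphere with its surface measure, and $\epsilon^1,\dots,\epsilon^d$ is the standard basis of $\mathbb R^d$. For $\xi\in\mathbb S^{d-1}$ set $\mathscr C_z^{\xi}=\{\eta\in\mathbb S^{d-1}:\langle\eta,\xi\rangle=z\xi_d\}$. This is a $(d-2)$-sphere of volume $V(\mathscr C_z^\xi)=|\mathbb S^{d-2}|(1-z^2\xi_d^2)^{(d-2)/2}$. For $f\in C(\mathbb S^{d-1})$ the spherical transform is $$\mathcal U_zf(\xi)=\frac{1}{V(\mathscr C_z^\xi)}\int_{\mathscr C_z^\xi}f\,\mathrm d\mathscr C_z^\xi,$$ the integral being against the $(d-2)$-dimensional surface measure. The maps $h_z,g_z:\mathbb S^{d-1}\to\mathbb S^{d-1}$ are $$h_z(\eta)=\sum_{i=1}^{d-1}\frac{\sqrt{1-z^2}}{1+z\eta_d}\eta_i\epsilon^i+\frac{z+\eta_d}{1+z\eta_d}\epsilon^d,$$ $$g_z(\xi)=(1-z^2\xi_d^2)^{-1/2}\Bigl(\sum_{i=1}^{d-1}\xi_i\epsilon^i+\sqrt{1-z^2}\xi_d\epsilon^d\Bigr).$$ The operators $\mathcal M_z,\mathcal N_z$ on $C(\mathbb S^{d-1})$ are $$\mathcal M_zf(\xi)=\Bigl(\frac{\sqrt{1-z^2}}{1+z\xi_d}\Bigr)^{d-2}f(h_z(\xi)),\qquad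 \mathcal N_zf(\xi)=(1-z^2\xi_d^2)^{-\frac{d-2}{2}}f(g_z(\xi)).$$ *)

theory Defs
  imports "HOL-Analysis.Analysis"
begin

text \<open>s-dimensional Hausdorff (outer) measure on a Euclidean space, with the
standard normalisation constant (volume of the unit ball of dimension s).\<close>

definition hausdorff_const :: "real \<Rightarrow> real" where
  "hausdorff_const s = pi powr (s / 2) / Gamma (s / 2 + 1) / 2 powr s"

definition hausdorff_approx :: "real \<Rightarrow> real \<Rightarrow> 'a::euclidean_space set \<Rightarrow> ennreal" where
  "hausdorff_approx s \<delta> A =
     (INF U \<in> {U :: nat \<Rightarrow> 'a set. A \<subseteq> (\<Union>i. U i) \<and>
                 (\<forall>i. bounded (U i) \<and> diameter (U i) \<le> \<delta>)}.
        (\<Sum>i. ennreal (hausdorff_const s * diameter (U i) powr s)))"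

definition hausdorff_outer :: "real \<Rightarrow> 'a::euclidean_space set \<Rightarrow> ennreal" where
  "hausdorff_outer s A = (SUP \<delta> \<in> {0<..}. hausdorff_approx s \<delta> A)"

definition hausdorff_measure :: "real \<Rightarrow> 'a::euclidean_space measure" where
  "hausdorff_measure s = measure_of UNIV (sets borel) (hausdorff_outer s)"

text \<open>Setting: vectors in R^d are of type real^'n with d = CARD('n); the
distinguished coordinate k plays the role of the last coordinate (index d).\<close>

definition circ :: "'n::finite \<Rightarrow> real \<Rightarrow> real^'n \<Rightarrow> (real^'n) set" where
  "circ k z \<xi> = {\<eta> \<in> sphere 0 1. \<eta> \<bullet> \<xi> = z * \<xi> $ k}"

definition sph_transform :: "'n::finite \<Rightarrow> real \<Rightarrow> (real^'n \<Rightarrow> real) \<Rightarrow> real^'n \<Rightarrow> real" where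
  "sph_transform k z f \<xi> =
     (let H = hausdorff_measure (real CARD('n) - 2) in
       (\<integral>\<eta>\<in>circ k z \<xi>. f \<eta> \<partial>H) / measure H (circ k z \<xi>))"

definition funk_radon :: "'n::finite \<Rightarrow> (real^'n \<Rightarrow> real) \<Rightarrow> real^'n \<Rightarrow> real" where
  "funk_radon k = sph_transform k 0"

definition hmap :: "'n::finite \<Rightarrow> real \<Rightarrow> real^'n \<Rightarrow> real^'n" where
  "hmap k z \<eta> = (\<chi> i. if i = k then (z + \<eta> $ k) / (1 + z * \<eta> $ k)
                      else sqrt (1 - z^2) / (1 + z * \<eta> $ k) * \<eta> $ i)"

definition gmap :: "'n::finite \<Rightarrow> real \<Rightarrow> real^'n \<Rightarrow> real^'n" where
  "gmap k z \<xi> = (1 - z^2 * (\<xi> $ k)^2) powr (-1/2) *\<^sub>R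
                  (\<chi> i. if i = k then sqrt (1 - z^2) * \<xi> $ k else \<xi> $ i)"

definition Mop :: "'n::finite \<Rightarrow> real \<Rightarrow> (real^'n \<Rightarrow> real) \<Rightarrow> real^'n \<Rightarrow> real" where
  "Mop k z f \<xi> = (sqrt (1 - z^2) / (1 + z * \<xi> $ k)) ^ (CARD('n) - 2) * f (hmap k z \<xi>)"

definition Nop :: "'n::finite \<Rightarrow> real \<Rightarrow> (real^'n \<Rightarrow> real) \<Rightarrow> real^'n \<Rightarrow> real" where
  "Nop k z f \<xi> = (1 - z^2 * (\<xi> $ k)^2) powr (- (real CARD('n) - 2) / 2) * f (gmap k z \<xi>)"

end

theory Submission
  imports Defs "HOL-Analysis.Analysis"
begin

lemma inner_split:
  fixes x y :: "real^'n"
  shows "x \<bullet> y = x$k * y$k + (\<Sum>i\<in>UNIV-{k}. x$i * y$i)"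
  unfolding inner_vec_def by (simp add: sum.remove[of UNIV k])

lemma hmap_nth: "hmap k z x $ i = (if i = k then (z + x $ k) / (1 + z * x $ k)
                      else sqrt (1 - z^2) / (1 + z * x $ k) * x $ i)"
  by (simp add: hmap_def)

lemma hmap_inner:
  fixes x y :: "real^'n"
  assumes z: "\<bar>z\<bar> < 1" and dx: "1 + z * x$k \<noteq> 0" and dy: "1 + z * y$k \<noteq> 0"
  shows "hmap k z x \<bullet> hmap k z y =
     ((1 - z^2) * (x \<bullet> y - x$k*y$k) + (z + x$k) * (z + y$k)) / ((1 + z*x$k) * (1 + z*y$k))"
proof -
  have sq: "sqrt (1 - z^2) * sqrt (1 - z^2) = 1 - z^2"
    using z by (simp add: abs_square_less_1 less_imp_le)
  have "(\<Sum>i\<in>UNIV-{k}. hmap k z x $ i * hmap k z y $ i) =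
        (\<Sum>i\<in>UNIV-{k}. ((sqrt (1 - z^2) * sqrt (1 - z^2)) / ((1 + z*x$k) * (1 + z*y$k))) * (x$i * y$i))"
    by (rule sum.cong) (auto simp: hmap_nth)
  also have "\<dots> = ((1 - z^2) / ((1 + z*x$k) * (1 + z*y$k))) * (x \<bullet> y - x$k*y$k)"
    unfolding sq by (simp add: sum_distrib_left[symmetric] sum_divide_distrib[symmetric] inner_split[of x y k])
  finally have se: "(\<Sum>i\<in>UNIV-{k}. hmap k z x $ i * hmap k z y $ i) = 
     ((1 - z^2) / ((1 + z*x$k) * (1 + z*y$k))) * (x \<bullet> y - x$k*y$k)" .
  have "hmap k z x \<bullet> hmap k z y = (z + x$k) / (1 + z*x$k) * ((z + y$k) / (1 + z*y$k))
     + ((1 - z^2) / ((1 + z*x$k) * (1 + z*y$k))) * (x \<bullet> y - x$k*y$k)"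
    by (subst inner_split[of _ _ k], subst se) (simp add: hmap_nth)
  also have "\<dots> = ((z + x$k) * (z + y$k) + (1 - z^2) * (x \<bullet> y - x$k*y$k)) / ((1 + z*x$k) * (1 + z*y$k))"
    by (subst times_divide_times_eq, subst times_divide_eq_left, subst add_divide_distrib[symmetric], rule refl)
  finally show ?thesis by (simp add: add.commute)
qed

lemma ennreal_mult_INF_const:
  fixes c :: ennreal
  assumes "c < top" "A \<noteq> {}"
  shows "c * (INF i\<in>A. F i) = (INF i\<in>A. c * F i)"
proof -
  have "mono (\<lambda>x::ennreal. c * x)" by (simp add: mono_def mult_left_mono)
  moreover have "continuous (at_right (Inf (F ` A))) (\<lambda>x::ennreal. c * x)"
  proof -
    have cU: "continuous_on UNIV (\<lambda>x::ennreal. c * x)"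
      by (rule ennreal_continuous_on_cmult[OF assms(1) continuous_on_id])
    show ?thesis
      by (rule continuous_at_imp_continuous_at_within, rule continuous_on_interior[OF cU]) simp
  qed
  ultimately have "c * Inf (F ` A) = Inf ((\<lambda>x. c * x) ` (F ` A))"
    using assms(2) by (intro continuous_at_Inf_mono) auto
  then show ?thesis by (simp add: image_comp)
qed

lemma hausdorff_const_nonneg: "0 \<le> s \<Longrightarrow> 0 \<le> hausdorff_const s"
  unfolding hausdorff_const_def
  by (intro divide_nonneg_pos divide_nonneg_nonneg) (auto intro!: Gamma_real_pos)

lemma lipschitz_image_bounded_diam:
  fixes \<phi> :: "'a::euclidean_space \<Rightarrow> 'b::euclidean_space"
  assumes L: "L > 0" and lip: "\<And>x y. x \<in> A \<Longrightarrow> y \<in> A \<Longrightarrow> dist (\<phi> x) (\<phi> y) \<le> L * dist x y"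
    and W: "W \<subseteq> A" "bounded W"
  shows "bounded (\<phi> ` W) \<and> diameter (\<phi> ` W) \<le> L * diameter W"
proof (cases "W = {}")
  case True then show ?thesis by simp
next
  case False
  then obtain w0 where w0: "w0 \<in> W" by auto
  have b: "dist (\<phi> x) (\<phi> y) \<le> L * diameter W" if "x \<in> W" "y \<in> W" for x y
  proof -
    have "dist (\<phi> x) (\<phi> y) \<le> L * dist x y" using lip W that by auto
    also have "\<dots> \<le> L * diameter W"
      using diameter_bounded_bound[OF W(2) that] L by simp
    finally show ?thesis .
  qed
  have "bounded (\<phi> ` W)"
    unfolding bounded_def using b w0 by blast
  moreover have "diameter (\<phi> ` W) \<le> L * diameter W"
    using b False by (intro diameter_le) (auto simp: dist_norm)
  ultimately show ?thesis by blast
qed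

lemma hausdorff_approx_lip:
  fixes \<phi> :: "'a::euclidean_space \<Rightarrow> 'b::euclidean_space"
  assumes s: "s > 0" and L: "L > 0"
    and lip: "\<And>x y. x \<in> A \<Longrightarrow> y \<in> A \<Longrightarrow> dist (\<phi> x) (\<phi> y) \<le> L * dist x y"
  shows "hausdorff_approx s (L * \<delta>) (\<phi> ` A) \<le> ennreal (L powr s) * hausdorff_approx s \<delta> A"
proof -
  define C where "C = {U :: nat \<Rightarrow> 'a set. A \<subseteq> (\<Union>i. U i) \<and>
                 (\<forall>i. bounded (U i) \<and> diameter (U i) \<le> \<delta>)}"
  define F where "F = (\<lambda>U :: nat \<Rightarrow> 'a set. (\<Sum>i. ennreal (hausdorff_const s * diameter (U i) powr s)))"
  have key: "hausdorff_approx s (L * \<delta>) (\<phi> ` A) \<le> ennreal (L powr s) * F U" if U: "U \<in> C" for U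
  proof -
    define V where "V = (\<lambda>i. \<phi> ` (U i \<inter> A))"
    have bd: "bounded (V i) \<and> diameter (V i) \<le> L * diameter (U i \<inter> A)" for i
      unfolding V_def using U unfolding C_def
      by (intro lipschitz_image_bounded_diam[OF L lip]) (auto intro: bounded_subset)
    have dV: "diameter (V i) \<le> L * diameter (U i)" for i
    proof -
      have "diameter (U i \<inter> A) \<le> diameter (U i)"
        using U unfolding C_def by (intro diameter_subset) auto
      then show ?thesis using bd[of i] L by (meson mult_left_mono less_imp_le order_trans)
    qed
    have dU: "diameter (U i) \<le> \<delta>" for i using U unfolding C_def by auto
    have "V \<in> {U :: nat \<Rightarrow> 'b set. \<phi> ` A \<subseteq> (\<Union>i. U i) \<and>
                 (\<forall>i. bounded (U i) \<and> diameter (U i) \<le> L * \<delta>)}"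
    proof (intro CollectI conjI allI)
      show "\<phi> ` A \<subseteq> (\<Union>i. V i)" using U unfolding C_def V_def by blast
      fix i show "bounded (V i)" using bd by auto
      show "diameter (V i) \<le> L * \<delta>" using dV[of i] dU[of i] L
        by (meson mult_left_mono less_imp_le order_trans)
    qed
    then have "hausdorff_approx s (L * \<delta>) (\<phi> ` A) \<le> (\<Sum>i. ennreal (hausdorff_const s * diameter (V i) powr s))"
      unfolding hausdorff_approx_def by (rule INF_lower)
    also have "\<dots> \<le> (\<Sum>i. ennreal (L powr s) * ennreal (hausdorff_const s * diameter (U i) powr s))"
    proof (rule suminf_le[OF _ summableI summableI])
      fix i
      have d0: "0 \<le> diameter (V i)" using diameter_ge_0 bd by blast
      have "diameter (V i) powr s \<le> (L * diameter (U i)) powr s"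
        using dV[of i] d0 s by (intro powr_mono2) auto
      also have "\<dots> = L powr s * diameter (U i) powr s"
        using L diameter_ge_0[of "U i"] U unfolding C_def by (simp add: powr_mult)
      finally have "hausdorff_const s * diameter (V i) powr s \<le> L powr s * (hausdorff_const s * diameter (U i) powr s)"
        using hausdorff_const_nonneg[of s] s by (simp add: mult_left_mono mult.left_commute)
      then show "ennreal (hausdorff_const s * diameter (V i) powr s) \<le> ennreal (L powr s) * ennreal (hausdorff_const s * diameter (U i) powr s)"
      proof -
        have "0 \<le> hausdorff_const s * diameter (U i) powr s"
          using hausdorff_const_nonneg[of s] s by simp
        then show ?thesis using \<open>hausdorff_const s * diameter (V i) powr s \<le> L powr s * (hausdorff_const s * diameter (U i) powr s)\<close>
        proof -
          have "ennreal (hausdorff_const s * diameter (V i) powr s) \<le> ennreal (L powr s * (hausdorff_const s * diameter (U i) powr s))"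
            by (rule ennreal_leI) fact
          then show ?thesis by (subst (asm) ennreal_mult') simp_all
        qed
      qed
    qed
    also have "\<dots> = ennreal (L powr s) * F U" unfolding F_def by simp
    finally show ?thesis .
  qed
  show ?thesis
  proof (cases "C = {}")
    case True
    have "hausdorff_approx s \<delta> A = (INF U\<in>C. F U)"
      unfolding hausdorff_approx_def C_def F_def by simp
    then have "hausdorff_approx s \<delta> A = top" using True by simp
    moreover have "ennreal (L powr s) \<noteq> 0" using L by simp
    ultimately show ?thesis by (metis ennreal_mult_top top_greatest)
  next
    case False
    have "hausdorff_approx s (L * \<delta>) (\<phi> ` A) \<le> (INF U\<in>C. ennreal (L powr s) * F U)"
      using key by (rule INF_greatest)
    also have "\<dots> = ennreal (L powr s) * (INF U\<in>C. F U)"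
      using False by (subst ennreal_mult_INF_const) auto
    also have "(INF U\<in>C. F U) = hausdorff_approx s \<delta> A"
      unfolding hausdorff_approx_def C_def F_def by simp
    finally show ?thesis .
  qed
qed

lemma hausdorff_outer_lip:
  fixes \<phi> :: "'a::euclidean_space \<Rightarrow> 'b::euclidean_space"
  assumes s: "s > 0" and L: "L > 0"
    and lip: "\<And>x y. x \<in> A \<Longrightarrow> y \<in> A \<Longrightarrow> dist (\<phi> x) (\<phi> y) \<le> L * dist x y"
  shows "hausdorff_outer s (\<phi> ` A) \<le> ennreal (L powr s) * hausdorff_outer s A"
  unfolding hausdorff_outer_def
proof (rule SUP_least)
  fix \<delta> :: real assume d: "\<delta> \<in> {0<..}"
  have "hausdorff_approx s \<delta> (\<phi> ` A) = hausdorff_approx s (L * (\<delta> / L)) (\<phi> ` A)"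
    using L by simp
  also have "\<dots> \<le> ennreal (L powr s) * hausdorff_approx s (\<delta> / L) A"
    by (rule hausdorff_approx_lip[OF s L lip])
  also have "\<dots> \<le> ennreal (L powr s) * (SUP \<delta>\<in>{0<..}. hausdorff_approx s \<delta> A)"
    using d L by (intro mult_left_mono SUP_upper) auto
  finally show "hausdorff_approx s \<delta> (\<phi> ` A) \<le> ennreal (L powr s) * (SUP \<delta>\<in>{0<..}. hausdorff_approx s \<delta> A)" .
qed

lemma hausdorff_outer_colip:
  fixes \<phi> :: "'a::euclidean_space \<Rightarrow> 'b::euclidean_space"
  assumes s: "s > 0" and L: "L > 0"
    and colip: "\<And>x y. x \<in> A \<Longrightarrow> y \<in> A \<Longrightarrow> L * dist x y \<le> dist (\<phi> x) (\<phi> y)"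
  shows "ennreal (L powr s) * hausdorff_outer s A \<le> hausdorff_outer s (\<phi> ` A)"
proof -
  have inj: "inj_on \<phi> A"
  proof (rule inj_onI)
    fix x y assume "x \<in> A" "y \<in> A" "\<phi> x = \<phi> y"
    then have "L * dist x y \<le> 0" using colip[of x y] by simp
    then show "x = y" using L by (simp add: mult_le_0_iff)
  qed
  define \<psi> where "\<psi> = inv_into A \<phi>"
  have img: "\<psi> ` (\<phi> ` A) = A" unfolding \<psi>_def using inj by (simp add: inv_into_image_cancel)
  have lip: "dist (\<psi> u) (\<psi> v) \<le> (1/L) * dist u v" if uv: "u \<in> \<phi> ` A" "v \<in> \<phi> ` A" for u v
  proof -
    obtain x y where xy: "x \<in> A" "y \<in> A" "u = \<phi> x" "v = \<phi> y" using uv by auto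
    have "\<psi> u = x" "\<psi> v = y" unfolding \<psi>_def using xy inj by auto
    then show ?thesis using colip[OF xy(1,2)] xy L by (simp add: field_simps)
  qed
  have "hausdorff_outer s A \<le> ennreal ((1/L) powr s) * hausdorff_outer s (\<phi> ` A)"
    using hausdorff_outer_lip[OF s _ lip, of "\<phi> ` A"] L img by simp
  then have "ennreal (L powr s) * hausdorff_outer s A \<le> ennreal (L powr s) * (ennreal ((1/L) powr s) * hausdorff_outer s (\<phi> ` A))"
    by (rule mult_left_mono) simp
  also have "\<dots> = ennreal (L powr s * (1/L) powr s) * hausdorff_outer s (\<phi> ` A)"
    by (simp add: ennreal_mult mult.assoc)
  also have "L powr s * (1/L) powr s = 1" using L by (simp add: powr_divide powr_minus_divide)
  finally show ?thesis by simp
qed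

lemma sphere_comp_le:
  fixes x :: "real^'n"
  assumes "x \<in> sphere 0 1" shows "\<bar>x $ k\<bar> \<le> 1"
  using component_le_norm_cart[of x k] assms by simp

lemma sphere_D_pos:
  fixes x :: "real^'n"
  assumes "x \<in> sphere 0 1" "\<bar>z\<bar> < 1" shows "0 < 1 + z * x $ k"
proof -
  have "\<bar>z\<bar> * \<bar>x $ k\<bar> \<le> \<bar>z\<bar>"
    using sphere_comp_le[OF assms(1), of k] by (intro mult_left_le) auto
  then have "\<bar>z * x $ k\<bar> < 1" using assms(2) by (simp add: abs_mult)
  then show ?thesis by (simp add: abs_less_iff)
qed

lemma sphere_inner_self:
  fixes x :: "real^'n"
  assumes "x \<in> sphere 0 1" shows "x \<bullet> x = 1"
  using assms by (simp add: power2_norm_eq_inner[symmetric])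

lemma hmap_one_minus_inner:
  fixes x y :: "real^'n"
  assumes z: "\<bar>z\<bar> < 1" and x: "x \<in> sphere 0 1" and y: "y \<in> sphere 0 1"
  shows "1 - hmap k z x \<bullet> hmap k z y = (1 - z^2) / ((1 + z*x$k) * (1 + z*y$k)) * (1 - x \<bullet> y)"
proof -
  have dx: "0 < 1 + z*x$k" and dy: "0 < 1 + z*y$k" using sphere_D_pos x y z by auto
  have e: "hmap k z x \<bullet> hmap k z y =
     ((1 - z^2) * (x \<bullet> y - x$k*y$k) + (z + x$k) * (z + y$k)) / ((1 + z*x$k) * (1 + z*y$k))"
    by (rule hmap_inner[OF z]) (use dx dy in auto)
  have "(1 + z*x$k) * (1 + z*y$k) - ((1 - z^2) * (x \<bullet> y - x$k*y$k) + (z + x$k) * (z + y$k))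
        = (1 - z^2) * (1 - x \<bullet> y)"
    by (simp add: algebra_simps power2_eq_square)
  moreover have "1 - hmap k z x \<bullet> hmap k z y = ((1 + z*x$k) * (1 + z*y$k) - ((1 - z^2) * (x \<bullet> y - x$k*y$k) + (z + x$k) * (z + y$k))) / ((1 + z*x$k) * (1 + z*y$k))"
    unfolding e using dx dy by (simp add: diff_divide_distrib)
  ultimately show ?thesis by simp
qed

lemma hmap_sphere:
  fixes x :: "real^'n"
  assumes z: "\<bar>z\<bar> < 1" and x: "x \<in> sphere 0 1"
  shows "hmap k z x \<in> sphere 0 1"
proof -
  have "1 - hmap k z x \<bullet> hmap k z x = 0"
    using hmap_one_minus_inner[OF z x x, of k] sphere_inner_self[OF x] by simp
  then have "hmap k z x \<bullet> hmap k z x = 1" by simp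
  then show ?thesis by (simp add: norm_eq_sqrt_inner)
qed

lemma sphere_dist_sq:
  fixes x y :: "real^'n"
  assumes x: "x \<in> sphere 0 1" and y: "y \<in> sphere 0 1"
  shows "(dist x y)^2 = 2 * (1 - x \<bullet> y)"
proof -
  have "(dist x y)^2 = (x - y) \<bullet> (x - y)" by (simp add: dist_norm power2_norm_eq_inner)
  also have "\<dots> = x \<bullet> x + y \<bullet> y - 2 * (x \<bullet> y)" by (simp add: inner_diff inner_commute)
  finally show ?thesis using sphere_inner_self[OF x] sphere_inner_self[OF y] by simp
qed

definition lam :: "'n::finite \<Rightarrow> real \<Rightarrow> real^'n \<Rightarrow> real" where
  "lam k z x = sqrt (1 - z^2) / (1 + z * x $ k)"

lemma lam_pos: 
  fixes x :: "real^'n"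
  assumes "x \<in> sphere 0 1" "\<bar>z\<bar> < 1" shows "0 < lam k z x"
  using sphere_D_pos[OF assms] assms(2) unfolding lam_def
  by (intro divide_pos_pos) (auto simp: abs_square_less_1)

lemma hmap_dist:
  fixes x y :: "real^'n"
  assumes z: "\<bar>z\<bar> < 1" and x: "x \<in> sphere 0 1" and y: "y \<in> sphere 0 1"
  shows "dist (hmap k z x) (hmap k z y) = sqrt (lam k z x * lam k z y) * dist x y"
proof -
  have dx: "0 < 1 + z*x$k" and dy: "0 < 1 + z*y$k" using sphere_D_pos x y z by auto
  have l: "lam k z x * lam k z y = (1 - z^2) / ((1 + z*x$k) * (1 + z*y$k))"
    unfolding lam_def using z by (simp add: abs_square_less_1 less_imp_le)
  have "(dist (hmap k z x) (hmap k z y))^2 = (lam k z x * lam k z y) * (dist x y)^2"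
    unfolding l sphere_dist_sq[OF hmap_sphere[OF z x] hmap_sphere[OF z y]] sphere_dist_sq[OF x y]
      hmap_one_minus_inner[OF z x y] by simp
  then have "dist (hmap k z x) (hmap k z y) = sqrt ((lam k z x * lam k z y) * (dist x y)^2)"
    by (metis zero_le_dist real_sqrt_unique)
  then show ?thesis by (simp add: real_sqrt_mult)
qed

lemma aux_div: "(c::real) \<noteq> 0 \<Longrightarrow> b \<noteq> 0 \<Longrightarrow> a / (b / c) * (a / c * x) = (a*a)/b * x"
  by (simp add: field_simps)

lemma hmap_inv:
  fixes x :: "real^'n"
  assumes z: "\<bar>z\<bar> < 1" and d: "1 + z * x$k \<noteq> 0"
  shows "hmap k (-z) (hmap k z x) = x"
proof -
  have z2: "0 < 1 - z^2" using z by (simp add: abs_square_less_1)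
  have sq: "sqrt (1 - z^2) * sqrt (1 - z^2) = 1 - z^2" using z2 by simp
  have dd: "1 - z * ((z + x $ k) / (1 + z * x $ k)) = (1 - z^2) / (1 + z * x$k)"
    using d by (simp add: field_simps power2_eq_square)
  define y where "y = hmap k z x"
  have yk: "y $ k = (z + x $ k) / (1 + z * x $ k)" unfolding y_def by (simp add: hmap_nth)
  have yi: "i \<noteq> k \<Longrightarrow> y $ i = sqrt (1 - z^2) / (1 + z * x $ k) * x $ i" for i
    unfolding y_def by (simp add: hmap_nth)
  have den: "1 + (-z) * y $ k = (1 - z^2) / (1 + z * x$k)" using dd yk by simp
  have num: "(- z + y $ k) = x$k * (1 - z^2) / (1 + z * x$k)"
    unfolding yk using d by (simp add: field_simps power2_eq_square)
  show ?thesis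
    unfolding y_def[symmetric]
  proof (subst vec_eq_iff, intro allI)
    fix i
    show "hmap k (-z) y $ i = x $ i"
    proof (cases "i = k")
      case True
      have "hmap k (-z) y $ k = (- z + y $ k) / (1 + (-z) * y $ k)" by (simp add: hmap_nth)
      also have "\<dots> = x $ k" unfolding num den using d z2 by simp
      finally show ?thesis using True by simp
    next
      case False
      have "hmap k (-z) y $ i = sqrt (1 - (-z)^2) / (1 + (-z) * y $ k) * y $ i"
        using False by (simp add: hmap_nth)
      also have "\<dots> = sqrt (1 - z^2) / ((1 - z^2) / (1 + z * x$k)) * (sqrt (1 - z^2) / (1 + z * x $ k) * x $ i)"
        unfolding den yi[OF False] by simp
      also have "\<dots> = (sqrt (1 - z^2) * sqrt (1 - z^2)) / (1 - z^2) * x $ i"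
        using z2 by (intro aux_div[OF d]) simp
      also have "\<dots> = x $ i" unfolding sq using z2 by simp
      finally show ?thesis .
    qed
  qed
qed

lemma hmap_bij:
  assumes z: "\<bar>z\<bar> < 1"
  shows "bij_betw (hmap k z) (sphere (0::real^'n) 1) (sphere 0 1)"
proof (rule bij_betw_byWitness[where f'="hmap k (-z)"])
  have z': "\<bar>-z\<bar> < 1" using z by simp
  show "\<forall>a\<in>sphere 0 1. hmap k (- z) (hmap k z a) = a"
    using hmap_inv[OF z] sphere_D_pos[OF _ z] by (metis less_irrefl)
  show "\<forall>a'\<in>sphere 0 1. hmap k z (hmap k (- z) a') = a'"
    using hmap_inv[OF z'] sphere_D_pos[OF _ z'] by (metis less_irrefl minus_minus)
  show "hmap k z ` sphere 0 1 \<subseteq> sphere 0 1" using hmap_sphere[OF z] by auto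
  show "hmap k (- z) ` sphere 0 1 \<subseteq> sphere 0 1" using hmap_sphere[OF z'] by auto
qed

lemma sphere_iff_inner: "(x::real^'n) \<in> sphere 0 1 \<longleftrightarrow> x \<bullet> x = 1"
  by (simp add: norm_eq_1)

lemma r_pos:
  fixes \<xi> :: "real^'n"
  assumes "\<xi> \<in> sphere 0 1" "\<bar>z\<bar> < 1"
  shows "0 < 1 - z^2 * (\<xi> $ k)^2"
proof -
  have "(\<xi> $ k)^2 \<le> 1" using sphere_comp_le[OF assms(1), of k] by (metis power2_abs power_le_one abs_ge_zero)
  moreover have "z^2 < 1" using assms(2) by (simp add: abs_square_less_1)
  ultimately have "z^2 * (\<xi> $ k)^2 < 1"
    using mult_left_mono[of "(\<xi> $ k)^2" 1 "z^2"] by simp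
  then show ?thesis by simp
qed

definition wvec :: "'n::finite \<Rightarrow> real \<Rightarrow> real^'n \<Rightarrow> real^'n" where
  "wvec k z \<xi> = (\<chi> i. if i = k then sqrt (1 - z^2) * \<xi> $ k else \<xi> $ i)"

lemma gmap_eq:
  fixes \<xi> :: "real^'n"
  assumes "\<xi> \<in> sphere 0 1" "\<bar>z\<bar> < 1"
  shows "gmap k z \<xi> = (1 / sqrt (1 - z^2 * (\<xi> $ k)^2)) *\<^sub>R wvec k z \<xi>"
proof -
  have p: "0 < 1 - z^2 * (\<xi> $ k)^2" by (rule r_pos[OF assms])
  have "(1 - z^2 * (\<xi> $ k)^2) powr (-1/2) = 1 / sqrt (1 - z^2 * (\<xi> $ k)^2)"
  proof -
    have e: "-1/2 = -(1/2::real)" by simp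
    show ?thesis by (simp only: e powr_minus_divide powr_half_sqrt[OF less_imp_le[OF p]])
  qed
  then show ?thesis unfolding gmap_def wvec_def by simp
qed

lemma wvec_inner:
  fixes x \<xi> :: "real^'n"
  shows "x \<bullet> wvec k z \<xi> = x$k * (sqrt (1 - z^2) * \<xi>$k) + (\<Sum>i\<in>UNIV-{k}. x$i * \<xi>$i)"
  by (subst inner_split[of x "wvec k z \<xi>" k]) (simp add: wvec_def)

lemma wvec_self:
  fixes \<xi> :: "real^'n"
  assumes "\<xi> \<in> sphere 0 1" "\<bar>z\<bar> < 1"
  shows "wvec k z \<xi> \<bullet> wvec k z \<xi> = 1 - z^2 * (\<xi> $ k)^2"
proof -
  have z2: "0 \<le> 1 - z^2" using assms(2) by (simp add: abs_square_less_1 less_imp_le)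
  have "wvec k z \<xi> \<bullet> wvec k z \<xi> = (\<xi>$k)^2 * (1 - z^2) + (\<Sum>i\<in>UNIV-{k}. \<xi>$i * \<xi>$i)"
    using z2 by (subst inner_split[of _ _ k]) (simp add: wvec_def power2_eq_square mult_ac)
  moreover have "(\<Sum>i\<in>UNIV-{k}. \<xi>$i * \<xi>$i) = 1 - (\<xi>$k)^2"
    using inner_split[of \<xi> \<xi> k] sphere_inner_self[OF assms(1)] by (simp add: power2_eq_square)
  ultimately show ?thesis by (simp add: algebra_simps)
qed

lemma gmap_sphere:
  fixes \<xi> :: "real^'n"
  assumes "\<xi> \<in> sphere 0 1" "\<bar>z\<bar> < 1"
  shows "gmap k z \<xi> \<in> sphere 0 1"
proof -
  have p: "0 < 1 - z^2 * (\<xi> $ k)^2" by (rule r_pos[OF assms])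
  show ?thesis unfolding sphere_iff_inner gmap_eq[OF assms]
    using p by (simp add: wvec_self[OF assms] power2_eq_square[symmetric])
qed

lemma hmap_inner_xi:
  fixes x \<xi> :: "real^'n"
  assumes z: "\<bar>z\<bar> < 1" and d: "1 + z * x$k \<noteq> 0"
  shows "(1 + z * x$k) * (hmap k z x \<bullet> \<xi>) = z * \<xi>$k * (1 + z * x$k) + sqrt (1 - z^2) * (x \<bullet> wvec k z \<xi>)"
proof -
  have z2: "0 \<le> 1 - z^2" using z by (simp add: abs_square_less_1 less_imp_le)
  define T where "T = (\<Sum>i\<in>UNIV-{k}. x$i * \<xi>$i)"
  have "(\<Sum>i\<in>UNIV-{k}. hmap k z x $ i * \<xi>$i) = (sqrt (1 - z^2) / (1 + z * x $ k)) * T"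
    unfolding T_def sum_distrib_left by (rule sum.cong) (auto simp: hmap_nth)
  then have "hmap k z x \<bullet> \<xi> = (z + x $ k) / (1 + z * x $ k) * \<xi>$k + (sqrt (1 - z^2) / (1 + z * x $ k)) * T"
    by (simp add: inner_split[of "hmap k z x" \<xi> k] hmap_nth)
  then have "(1 + z * x$k) * (hmap k z x \<bullet> \<xi>) = ((1 + z * x$k) * ((z + x $ k) / (1 + z * x $ k))) * \<xi>$k + ((1 + z * x$k) * (sqrt (1 - z^2) / (1 + z * x $ k))) * T"
    by (simp only: distrib_left mult.assoc[symmetric])
  also have "\<dots> = (z + x $ k) * \<xi>$k + sqrt (1 - z^2) * T"
    using d by simp
  also have "\<dots> = z * \<xi>$k * (1 + z * x$k) + sqrt (1 - z^2) * (x$k * (sqrt (1 - z^2) * \<xi>$k) + T)"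
    using z2 by (simp add: algebra_simps power2_eq_square flip: real_sqrt_mult)
  finally show ?thesis unfolding wvec_inner T_def .
qed

lemma circ_char:
  fixes x \<xi> :: "real^'n"
  assumes x: "x \<in> sphere 0 1" and xi: "\<xi> \<in> sphere 0 1" and z: "\<bar>z\<bar> < 1"
  shows "hmap k z x \<bullet> \<xi> = z * \<xi> $ k \<longleftrightarrow> x \<bullet> gmap k z \<xi> = 0"
proof -
  have D: "0 < 1 + z * x$k" by (rule sphere_D_pos[OF x z])
  have s: "0 < sqrt (1 - z^2)" using z by (simp add: abs_square_less_1)
  have r: "0 < sqrt (1 - z^2 * (\<xi> $ k)^2)" using r_pos[OF xi z, of k] by simp
  have e: "(1 + z * x$k) * (hmap k z x \<bullet> \<xi>) = z * \<xi>$k * (1 + z * x$k) + sqrt (1 - z^2) * (x \<bullet> wvec k z \<xi>)"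
    by (rule hmap_inner_xi[OF z]) (use D in simp)
  have "hmap k z x \<bullet> \<xi> = z * \<xi> $ k \<longleftrightarrow> (1 + z * x$k) * (hmap k z x \<bullet> \<xi>) = (1 + z * x$k) * (z * \<xi> $ k)"
    using D by simp
  also have "\<dots> \<longleftrightarrow> sqrt (1 - z^2) * (x \<bullet> wvec k z \<xi>) = 0" unfolding e by (simp add: algebra_simps)
  also have "\<dots> \<longleftrightarrow> x \<bullet> wvec k z \<xi> = 0" using s by simp
  also have "\<dots> \<longleftrightarrow> x \<bullet> gmap k z \<xi> = 0" unfolding gmap_eq[OF xi z] using r by simp
  finally show ?thesis .
qed

lemma hmap_circ:
  fixes \<xi> :: "real^'n"
  assumes xi: "\<xi> \<in> sphere 0 1" and z: "\<bar>z\<bar> < 1"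
  shows "hmap k z ` circ k 0 (gmap k z \<xi>) = circ k z \<xi>"
proof
  show "hmap k z ` circ k 0 (gmap k z \<xi>) \<subseteq> circ k z \<xi>"
    using circ_char[OF _ xi z] hmap_sphere[OF z] unfolding circ_def by auto
  show "circ k z \<xi> \<subseteq> hmap k z ` circ k 0 (gmap k z \<xi>)"
  proof
    fix y assume y: "y \<in> circ k z \<xi>"
    then have yS: "y \<in> sphere 0 1" and yx: "y \<bullet> \<xi> = z * \<xi> $ k" unfolding circ_def by auto
    have z': "\<bar>-z\<bar> < 1" using z by simp
    define x where "x = hmap k (-z) y"
    have xS: "x \<in> sphere 0 1" unfolding x_def by (rule hmap_sphere[OF z' yS])
    have hx: "hmap k z x = y" unfolding x_def
      using hmap_inv[OF z'] sphere_D_pos[OF yS z'] by (metis less_irrefl minus_minus)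
    have "x \<bullet> gmap k z \<xi> = 0" using circ_char[OF xS xi z, of k] yx hx by simp
    then have "x \<in> circ k 0 (gmap k z \<xi>)" using xS unfolding circ_def by simp
    then show "y \<in> hmap k z ` circ k 0 (gmap k z \<xi>)" using hx by blast
  qed
qed

lemma circ_similar:
  fixes \<xi> :: "real^'n"
  assumes xi: "\<xi> \<in> sphere 0 1" and z: "\<bar>z\<bar> < 1"
  obtains \<phi> where "\<And>x y. dist (\<phi> x) (\<phi> y) = sqrt (1 - z^2 * (\<xi> $ k)^2) * dist x y"
    "\<phi> ` circ k 0 (gmap k z \<xi>) = circ k z \<xi>"
proof -
  define g where "g = gmap k z \<xi>"
  define r where "r = sqrt (1 - z^2 * (\<xi> $ k)^2)"
  define c where "c = (z * \<xi> $ k) *\<^sub>R \<xi>"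
  have gS: "g \<in> sphere 0 1" unfolding g_def by (rule gmap_sphere[OF xi z])
  have r0: "0 < r" unfolding r_def using r_pos[OF xi z, of k] by simp
  have r2: "r^2 = 1 - z^2 * (\<xi> $ k)^2" unfolding r_def using r_pos[OF xi z, of k] by simp
  have xx: "\<xi> \<bullet> \<xi> = 1" by (rule sphere_inner_self[OF xi])
  obtain R where R: "orthogonal_transformation R" "R g = \<xi>"
    using orthogonal_transformation_exists[of g \<xi>] gS xi by auto
  have Rin: "R u \<bullet> R v = u \<bullet> v" for u v using R(1) unfolding orthogonal_transformation_def by simp
  have Rlin: "linear R" using R(1) by (simp add: orthogonal_transformation_def)
  define \<phi> where "\<phi> = (\<lambda>x. c + r *\<^sub>R R x)"
  have dist: "dist (\<phi> x) (\<phi> y) = r * dist x y" for x y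
  proof -
    have "\<phi> x - \<phi> y = r *\<^sub>R (R x - R y)" unfolding \<phi>_def by (simp add: algebra_simps)
    also have "R x - R y = R (x - y)" by (rule linear_diff[OF Rlin, symmetric])
    finally have "\<phi> x - \<phi> y = r *\<^sub>R R (x - y)" .
    then show ?thesis using r0 orthogonal_transformation_norm[OF R(1)] by (simp add: dist_norm)
  qed
  have img: "\<phi> ` circ k 0 g = circ k z \<xi>"
  proof
    show "\<phi> ` circ k 0 g \<subseteq> circ k z \<xi>"
    proof
      fix y assume "y \<in> \<phi> ` circ k 0 g"
      then obtain x where x: "x \<bullet> x = 1" "x \<bullet> g = 0" and y: "y = \<phi> x"
        unfolding circ_def sphere_iff_inner by auto
      have Rx: "R x \<bullet> \<xi> = 0" using Rin[of x g] x R(2) by simp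
      have RxRx: "R x \<bullet> R x = 1" using Rin[of x x] x by simp
      have "y \<bullet> y = (z * \<xi> $ k)^2 * (\<xi> \<bullet> \<xi>) + 2 * (z * \<xi> $ k) * r * (R x \<bullet> \<xi>) + r^2 * (R x \<bullet> R x)"
        unfolding y \<phi>_def c_def by (simp add: inner_add inner_commute algebra_simps power2_eq_square)
      also have "\<dots> = 1" unfolding Rx RxRx xx r2 by (simp add: power2_eq_square)
      finally have yy: "y \<bullet> y = 1" .
      have "y \<bullet> \<xi> = z * \<xi> $ k * (\<xi> \<bullet> \<xi>) + r * (R x \<bullet> \<xi>)"
        unfolding y \<phi>_def c_def by (simp add: inner_add)
      then have "y \<bullet> \<xi> = z * \<xi> $ k" unfolding Rx xx by simp
      then show "y \<in> circ k z \<xi>" using yy unfolding circ_def sphere_iff_inner by simp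
    qed
    show "circ k z \<xi> \<subseteq> \<phi> ` circ k 0 g"
    proof
      fix y assume "y \<in> circ k z \<xi>"
      then have yy: "y \<bullet> y = 1" and yx: "y \<bullet> \<xi> = z * \<xi> $ k" unfolding circ_def sphere_iff_inner by auto
      obtain x where x: "R x = (1/r) *\<^sub>R (y - c)"
        using orthogonal_transformation_surj[OF R(1)] by (metis surjD)
      have yc: "(y - c) \<bullet> \<xi> = 0" unfolding c_def using yx xx by (simp add: inner_diff)
      have "x \<bullet> g = R x \<bullet> R g" using Rin by simp
      also have "\<dots> = 0" unfolding x R(2) using yc by simp
      finally have xg: "x \<bullet> g = 0" .
      have "(y - c) \<bullet> (y - c) = y \<bullet> y - 2 * (z * \<xi> $ k) * (y \<bullet> \<xi>) + (z * \<xi> $ k)^2 * (\<xi> \<bullet> \<xi>)"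
        unfolding c_def by (simp add: inner_diff inner_commute algebra_simps power2_eq_square)
      also have "\<dots> = r^2" unfolding yy yx xx r2 by (simp add: power2_eq_square)
      finally have ycyc: "(y - c) \<bullet> (y - c) = r^2" .
      have "x \<bullet> x = R x \<bullet> R x" using Rin by simp
      also have "\<dots> = (1/r)^2 * ((y - c) \<bullet> (y - c))" unfolding x by (simp add: power2_eq_square)
      also have "\<dots> = 1" unfolding ycyc using r0 by (simp add: power2_eq_square)
      finally have xx1: "x \<bullet> x = 1" .
      have "\<phi> x = y" unfolding \<phi>_def x using r0 by simp
      moreover have "x \<in> circ k 0 g" unfolding circ_def sphere_iff_inner using xx1 xg by simp
      ultimately show "y \<in> \<phi> ` circ k 0 g" by blast
    qed
  qed
  show ?thesis using that[of \<phi>] dist img unfolding g_def r_def by blast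
qed

lemma sets_H [simp, measurable_cong]: "sets (hausdorff_measure s :: 'a::euclidean_space measure) = sets borel"
  unfolding hausdorff_measure_def
  by (metis sets.sigma_sets_eq space_borel sets_measure_of sets.space_closed)

lemma space_H [simp]: "space (hausdorff_measure s :: 'a::euclidean_space measure) = UNIV"
  unfolding hausdorff_measure_def by (simp add: space_measure_of_conv)

lemma emeasure_H_conv:
  "emeasure (hausdorff_measure s :: 'a::euclidean_space measure) B =
     (if B \<in> sets borel \<and> measure_space UNIV (sets borel) (hausdorff_outer s :: 'a set \<Rightarrow> ennreal)
      then hausdorff_outer s B else 0)"
proof -
  have "sigma_sets UNIV (sets (borel :: 'a measure)) = sets borel"
    by (metis sets.sigma_sets_eq space_borel)
  then show ?thesis unfolding hausdorff_measure_def emeasure_measure_of_conv by simp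
qed

lemma meas_nth [measurable]: "(\<lambda>x::real^'n. x $ i) \<in> borel_measurable borel"
  by (intro borel_measurable_continuous_onI continuous_on_component continuous_on_id)

lemma meas_vec:
  fixes F :: "'a \<Rightarrow> 'n::finite \<Rightarrow> real"
  assumes "\<And>i. (\<lambda>x. F x i) \<in> borel_measurable M"
  shows "(\<lambda>x. (\<chi> i. F x i) :: real^'n) \<in> borel_measurable M"
  unfolding borel_measurable_euclidean_space[where 'c="real^'n"]
  using assms by (auto simp: Basis_vec_def inner_axis)

lemma hmap_meas [measurable]:
  fixes k :: "'n::finite"
  shows "(hmap k z :: real^'n \<Rightarrow> real^'n) \<in> borel_measurable borel"
proof -
  have "(\<lambda>x. (\<chi> i. if i = k then (z + x $ k) / (1 + z * x $ k)
                      else sqrt (1 - z^2) / (1 + z * x $ k) * x $ i) :: real^'n) \<in> borel_measurable borel"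
    by (rule meas_vec) measurable
  then show ?thesis unfolding hmap_def[abs_def] .
qed

lemma lam_meas [measurable]: "lam k z \<in> borel_measurable borel"
  unfolding lam_def[abs_def] by measurable

lemma sphere_borel [measurable]: "sphere (0::'a::euclidean_space) 1 \<in> sets borel"
  by (simp add: closed_sphere)

lemma hmap_img_borel:
  assumes z: "\<bar>z\<bar> < 1" and P: "P \<in> sets borel" "P \<subseteq> sphere (0::real^'n) 1"
  shows "hmap k z ` P \<in> sets borel"
proof -
  have z': "\<bar>-z\<bar> < 1" using z by simp
  have "hmap k z ` P = sphere 0 1 \<inter> (hmap k (-z) -` P)"
  proof (intro equalityI subsetI)
    fix y assume "y \<in> hmap k z ` P"
    then obtain x where x: "x \<in> P" "y = hmap k z x" by auto
    have "hmap k z x \<in> sphere 0 1" by (intro hmap_sphere[OF z]) (use P x in auto)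
    moreover have "hmap k (-z) (hmap k z x) \<in> P" using x P hmap_inv[OF z] sphere_D_pos[OF _ z]
      by (metis less_irrefl subsetD)
    ultimately show "y \<in> sphere 0 1 \<inter> (hmap k (-z) -` P)" using x by simp
  next
    fix y assume "y \<in> sphere 0 1 \<inter> (hmap k (-z) -` P)"
    then have y: "y \<in> sphere 0 1" "hmap k (-z) y \<in> P" by auto
    have "hmap k z (hmap k (-z) y) = y"
      using hmap_inv[OF z'] sphere_D_pos[OF y(1) z'] by (metis less_irrefl minus_minus)
    then show "y \<in> hmap k z ` P" using y by (metis image_eqI)
  qed
  also have "\<dots> \<in> sets borel" using P by measurable
  finally show ?thesis .
qed

lemma ennreal_le_of_approx:
  fixes x y :: ennreal
  assumes le: "\<And>m. x \<le> ennreal ((1 + 1 / real (Suc m)) ^ n) * y"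
  shows "x \<le> y"
proof (cases "y = top")
  case True then show ?thesis by simp
next
  case False
  then have yt: "y < top" by (simp add: top.not_eq_extremum)
  have "(\<lambda>m. 1 + 1 / real (Suc m)) \<longlonglongrightarrow> 1 + 0"
    using LIMSEQ_inverse_real_of_nat by (intro tendsto_add tendsto_const) (simp add: inverse_eq_divide)
  then have "(\<lambda>m. (1 + 1 / real (Suc m)) ^ n) \<longlonglongrightarrow> 1"
    using tendsto_power[of "\<lambda>m. 1 + 1 / real (Suc m)" 1 sequentially n] by simp
  then have "(\<lambda>m. ennreal ((1 + 1 / real (Suc m)) ^ n)) \<longlonglongrightarrow> ennreal 1"
    by (rule tendsto_ennrealI)
  then have "(\<lambda>m. y * ennreal ((1 + 1 / real (Suc m)) ^ n)) \<longlonglongrightarrow> y * ennreal 1"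
    by (rule ennreal_tendsto_cmult[OF yt])
  then have lim: "(\<lambda>m. ennreal ((1 + 1 / real (Suc m)) ^ n) * y) \<longlonglongrightarrow> y"
    by (simp add: mult.commute)
  show ?thesis
    by (rule LIMSEQ_le_const[OF lim]) (use le in auto)
qed

lemma EH:
  assumes MS: "measure_space UNIV (sets borel) (hausdorff_outer s :: 'a::euclidean_space set \<Rightarrow> ennreal)"
    and B: "B \<in> sets borel"
  shows "emeasure (hausdorff_measure s :: 'a measure) B = hausdorff_outer s B"
  using MS B by (simp add: emeasure_H_conv)

lemma lam_lower:
  fixes x :: "real^'n"
  assumes x: "x \<in> sphere 0 1" and z: "\<bar>z\<bar> < 1"
  shows "sqrt (1 - z^2) / (1 + \<bar>z\<bar>) \<le> lam k z x"
proof -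
  have D: "0 < 1 + z * x $ k" by (rule sphere_D_pos[OF x z])
  have "z * x $ k \<le> \<bar>z\<bar>"
    using sphere_comp_le[OF x, of k] by (metis abs_ge_self abs_mult mult_left_le abs_ge_zero order_trans)
  then have "1 + z * x $ k \<le> 1 + \<bar>z\<bar>" by simp
  moreover have "0 \<le> 1 - z^2" using z by (simp add: abs_square_less_1 less_imp_le)
  ultimately show ?thesis unfolding lam_def using D by (intro divide_left_mono) auto
qed

lemma piece:
  fixes P :: "(real^'n) set" and k :: 'n and n :: nat
  defines "H \<equiv> hausdorff_measure (real n) :: (real^'n) measure"
  assumes MS: "measure_space UNIV (sets borel) (hausdorff_outer (real n) :: (real^'n) set \<Rightarrow> ennreal)"
    and n: "n \<ge> 1" and z: "\<bar>z\<bar> < 1" and P: "P \<in> sets borel" "P \<subseteq> sphere 0 1"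
    and a: "a > 0" and q: "q \<ge> 1" and bnd: "\<And>x. x \<in> P \<Longrightarrow> a \<le> lam k z x \<and> lam k z x \<le> q * a"
  shows "emeasure H (hmap k z ` P) \<le> ennreal (q^n) * emeasure (density H (\<lambda>x. ennreal (lam k z x ^ n))) P"
    and "emeasure (density H (\<lambda>x. ennreal (lam k z x ^ n))) P \<le> ennreal (q^n) * emeasure H (hmap k z ` P)"
proof -
  have s: "real n > 0" using n by simp
  have qa: "q * a > 0" using a q by simp
  have hP: "hmap k z ` P \<in> sets borel" by (rule hmap_img_borel[OF z P])
  have lip: "dist (hmap k z x) (hmap k z y) \<le> (q * a) * dist x y" if "x \<in> P" "y \<in> P" for x y
  proof -
    have xs: "x \<in> sphere 0 1" "y \<in> sphere 0 1" using that P by auto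
    have "lam k z x * lam k z y \<le> (q * a)^2"
      unfolding power2_eq_square using bnd[OF that(1)] bnd[OF that(2)] a lam_pos[OF xs(1) z] lam_pos[OF xs(2) z]
      by (intro mult_mono) auto
    then have "sqrt (lam k z x * lam k z y) \<le> sqrt ((q * a)^2)"
      by (rule real_sqrt_le_mono)
    then have "sqrt (lam k z x * lam k z y) \<le> q * a"
      using qa by simp
    then show ?thesis unfolding hmap_dist[OF z xs] by (intro mult_right_mono) auto
  qed
  have colip: "a * dist x y \<le> dist (hmap k z x) (hmap k z y)" if "x \<in> P" "y \<in> P" for x y
  proof -
    have xs: "x \<in> sphere 0 1" "y \<in> sphere 0 1" using that P by auto
    have "a^2 \<le> lam k z x * lam k z y"
      unfolding power2_eq_square using bnd[OF that(1)] bnd[OF that(2)] a by (intro mult_mono) auto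
    then have "sqrt (a^2) \<le> sqrt (lam k z x * lam k z y)"
      by (rule real_sqrt_le_mono)
    then have "a \<le> sqrt (lam k z x * lam k z y)"
      using a by simp
    then show ?thesis unfolding hmap_dist[OF z xs] by (intro mult_right_mono) auto
  qed
  have up: "emeasure H (hmap k z ` P) \<le> ennreal ((q * a) ^ n) * emeasure H P"
    using hausdorff_outer_lip[OF s qa lip] unfolding H_def EH[OF MS P(1)] EH[OF MS hP]
    using qa by (simp add: powr_realpow)
  have lo: "ennreal (a ^ n) * emeasure H P \<le> emeasure H (hmap k z ` P)"
    using hausdorff_outer_colip[OF s a colip] unfolding H_def EH[OF MS P(1)] EH[OF MS hP]
    using a by (simp add: powr_realpow)
  have nu: "emeasure (density H (\<lambda>x. ennreal (lam k z x ^ n))) P = (\<integral>\<^sup>+x. ennreal (lam k z x ^ n) * indicator P x \<partial>H)"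
    unfolding H_def by (rule emeasure_density) (use P in auto)
  have nu_lo: "ennreal (a ^ n) * emeasure H P \<le> emeasure (density H (\<lambda>x. ennreal (lam k z x ^ n))) P"
  proof -
    have "ennreal (a ^ n) * emeasure H P = (\<integral>\<^sup>+x. ennreal (a ^ n) * indicator P x \<partial>H)"
      unfolding H_def by (rule nn_integral_cmult_indicator[symmetric]) (use P in auto)
    also have "\<dots> \<le> (\<integral>\<^sup>+x. ennreal (lam k z x ^ n) * indicator P x \<partial>H)"
    proof (rule nn_integral_mono)
      fix x show "ennreal (a ^ n) * indicator P x \<le> ennreal (lam k z x ^ n) * indicator P x"
        using bnd[of x] a by (cases "x \<in> P") (auto intro!: ennreal_leI power_mono)
    qed
    finally show ?thesis unfolding nu .
  qed
  have nu_up: "emeasure (density H (\<lambda>x. ennreal (lam k z x ^ n))) P \<le> ennreal ((q * a) ^ n) * emeasure H P"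
  proof -
    have "(\<integral>\<^sup>+x. ennreal (lam k z x ^ n) * indicator P x \<partial>H) \<le> (\<integral>\<^sup>+x. ennreal ((q * a) ^ n) * indicator P x \<partial>H)"
    proof (rule nn_integral_mono)
      fix x show "ennreal (lam k z x ^ n) * indicator P x \<le> ennreal ((q * a) ^ n) * indicator P x"
        using bnd[of x] P lam_pos[OF _ z, of x k] by (cases "x \<in> P") (auto intro!: ennreal_leI power_mono)
    qed
    also have "\<dots> = ennreal ((q * a) ^ n) * emeasure H P"
      unfolding H_def by (rule nn_integral_cmult_indicator) (use P in auto)
    finally show ?thesis unfolding nu .
  qed
  have split: "ennreal ((q * a) ^ n) * X = ennreal (q ^ n) * (ennreal (a ^ n) * X)" for X
    using q a by (simp add: power_mult_distrib ennreal_mult mult.assoc)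
  show "emeasure H (hmap k z ` P) \<le> ennreal (q^n) * emeasure (density H (\<lambda>x. ennreal (lam k z x ^ n))) P"
    using up nu_lo unfolding split by (meson mult_left_mono order_trans zero_le)
  show "emeasure (density H (\<lambda>x. ennreal (lam k z x ^ n))) P \<le> ennreal (q ^ n) * emeasure H (hmap k z ` P)"
    using nu_up lo unfolding split by (meson mult_left_mono order_trans zero_le)
qed

lemma CV:
  fixes B :: "(real^'n) set" and k :: 'n and n :: nat
  defines "H \<equiv> hausdorff_measure (real n) :: (real^'n) measure"
  assumes MS: "measure_space UNIV (sets borel) (hausdorff_outer (real n) :: (real^'n) set \<Rightarrow> ennreal)"
    and n: "n \<ge> 1" and z: "\<bar>z\<bar> < 1" and B: "B \<in> sets borel" "B \<subseteq> sphere 0 1"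
  shows "emeasure H (hmap k z ` B) = emeasure (density H (\<lambda>x. ennreal (lam k z x ^ n))) B"
proof -
  define \<nu> where "\<nu> = density H (\<lambda>x. ennreal (lam k z x ^ n))"
  have sets_nu: "sets \<nu> = sets borel" unfolding \<nu>_def H_def by simp
  define c0 where "c0 = sqrt (1 - z^2) / (1 + \<bar>z\<bar>)"
  have c0: "c0 > 0" unfolding c0_def using z by (auto simp: abs_square_less_1)
  have lamc0: "c0 \<le> lam k z x" if "x \<in> sphere 0 1" for x
    unfolding c0_def by (rule lam_lower[OF that z])
  have main: "emeasure H (hmap k z ` B) \<le> ennreal (q^n) * emeasure \<nu> B \<and>
              emeasure \<nu> B \<le> ennreal (q^n) * emeasure H (hmap k z ` B)" if q: "q > 1" for q
  proof -
    define P where "P = (\<lambda>j::nat. {x \<in> B. c0 * q^j \<le> lam k z x \<and> lam k z x < c0 * q^(Suc j)})"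
    have Pmeas: "P j \<in> sets borel" for j
    proof -
      have "P j = B \<inter> {x \<in> space borel. c0 * q^j \<le> lam k z x \<and> lam k z x < c0 * q^(Suc j)}"
        unfolding P_def by auto
      also have "\<dots> \<in> sets borel" using B(1) by measurable
      finally show ?thesis .
    qed
    have PS: "P j \<subseteq> sphere 0 1" for j using B(2) unfolding P_def by auto
    have disj0: "P i \<inter> P j = {}" if "i \<noteq> j" for i j
      proof (rule ccontr)
        assume "P i \<inter> P j \<noteq> {}"
        then obtain x where x: "x \<in> P i" "x \<in> P j" by auto
        have mono: "c0 * q^(Suc a) \<le> c0 * q^b" if "a < b" for a b :: nat
          using that q c0 by (intro mult_left_mono power_increasing) auto
        show False
        proof (cases "i < j")
          case True
          then show False using mono[OF True] x unfolding P_def by auto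
        next
          case False
          then have "j < i" using \<open>i \<noteq> j\<close> by simp
          then show False using mono[of j i] x unfolding P_def by auto
        qed
      qed
    have disj: "disjoint_family P" unfolding disjoint_family_on_def using disj0 by blast
    have cover: "(\<Union>j. P j) = B"
    proof
      show "(\<Union>j. P j) \<subseteq> B" unfolding P_def by auto
      show "B \<subseteq> (\<Union>j. P j)"
      proof
        fix x assume xB: "x \<in> B"
        have lx: "c0 \<le> lam k z x" using lamc0 xB B(2) by auto
        obtain N where "lam k z x / c0 < q^N" using real_arch_pow[OF q] by blast
        then have ex: "lam k z x < c0 * q^N" using c0 by (simp add: field_simps)
        define M where "M = (LEAST N. lam k z x < c0 * q^N)"
        have M1: "lam k z x < c0 * q^M" unfolding M_def by (rule LeastI[of _ N]) (rule ex)
        have M0: "M \<noteq> 0" proof assume "M = 0" then show False using M1 lx by simp qed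
        then obtain j where j: "M = Suc j" by (cases M) auto
        have "\<not> lam k z x < c0 * q^j" unfolding M_def
          by (rule not_less_Least) (use j M_def in simp)
        then have "x \<in> P j" unfolding P_def using xB M1 j by auto
        then show "x \<in> (\<Union>j. P j)" by blast
      qed
    qed
    have inj: "inj_on (hmap k z) (sphere 0 1)" using hmap_bij[OF z, of k] by (simp add: bij_betw_def)
    have idisj0: "hmap k z ` P i \<inter> hmap k z ` P j = {}" if "i \<noteq> j" for i j
    proof -
      have "hmap k z ` P i \<inter> hmap k z ` P j = hmap k z ` (P i \<inter> P j)"
        using inj PS by (simp add: inj_on_image_Int)
      also have "\<dots> = {}" using disj0[OF that] by auto
      finally show "hmap k z ` P i \<inter> hmap k z ` P j = {}" .
    qed
    have idisj: "disjoint_family (\<lambda>j. hmap k z ` P j)" unfolding disjoint_family_on_def using idisj0 by blast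
    have imeas: "hmap k z ` P j \<in> sets borel" for j by (rule hmap_img_borel[OF z Pmeas PS])
    have muB: "emeasure H (hmap k z ` B) = (\<Sum>j. emeasure H (hmap k z ` P j))"
    proof -
      have "hmap k z ` B = (\<Union>j. hmap k z ` P j)" unfolding cover[symmetric] by (simp add: image_UN)
      moreover have r: "range (\<lambda>j. hmap k z ` P j) \<subseteq> sets H" using imeas unfolding H_def by auto
      ultimately show ?thesis using suminf_emeasure[OF r idisj] by simp
    qed
    have nuB: "emeasure \<nu> B = (\<Sum>j. emeasure \<nu> (P j))"
    proof -
      have r: "range P \<subseteq> sets \<nu>" using Pmeas sets_nu by auto
      show ?thesis using suminf_emeasure[OF r disj] cover by simp
    qed
    have pc: "emeasure H (hmap k z ` P j) \<le> ennreal (q^n) * emeasure \<nu> (P j) \<and>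
              emeasure \<nu> (P j) \<le> ennreal (q^n) * emeasure H (hmap k z ` P j)" for j
    proof -
      have bnd: "c0 * q^j \<le> lam k z x \<and> lam k z x \<le> q * (c0 * q^j)" if "x \<in> P j" for x
        using that unfolding P_def by (auto simp: mult_ac)
      have a: "c0 * q^j > 0" using c0 q by simp
      show ?thesis
        using piece[OF MS n z Pmeas PS a _ bnd] q unfolding \<nu>_def H_def by auto
    qed
    have "emeasure H (hmap k z ` B) \<le> (\<Sum>j. ennreal (q^n) * emeasure \<nu> (P j))"
      unfolding muB by (rule suminf_le[OF _ summableI summableI]) (use pc in blast)
    also have "\<dots> = ennreal (q^n) * emeasure \<nu> B" unfolding nuB by simp
    finally have 1: "emeasure H (hmap k z ` B) \<le> ennreal (q^n) * emeasure \<nu> B" .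
    have "emeasure \<nu> B \<le> (\<Sum>j. ennreal (q^n) * emeasure H (hmap k z ` P j))"
      unfolding nuB by (rule suminf_le[OF _ summableI summableI]) (use pc in blast)
    also have "\<dots> = ennreal (q^n) * emeasure H (hmap k z ` B)" unfolding muB by simp
    finally have 2: "emeasure \<nu> B \<le> ennreal (q^n) * emeasure H (hmap k z ` B)" .
    show ?thesis using 1 2 by blast
  qed
  have q1: "(1::real) + 1 / real (Suc m) > 1" for m by simp
  show ?thesis unfolding \<nu>_def[symmetric]
  proof (rule antisym)
    show "emeasure H (hmap k z ` B) \<le> emeasure \<nu> B"
      by (rule ennreal_le_of_approx[where n=n]) (use main[OF q1] in blast)
    show "emeasure \<nu> B \<le> emeasure H (hmap k z ` B)"
      by (rule ennreal_le_of_approx[where n=n]) (use main[OF q1] in blast)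
  qed
qed

lemma circ_sub: "circ k z \<xi> \<subseteq> sphere 0 1" unfolding circ_def by auto

lemma circ_borel [measurable]: "circ k z \<xi> \<in> sets borel"
proof -
  have "circ k z \<xi> = {\<eta> \<in> space borel. \<eta> \<in> sphere 0 1 \<and> \<eta> \<bullet> \<xi> = z * \<xi> $ k}"
    unfolding circ_def by auto
  also have "\<dots> \<in> sets borel" by measurable
  finally show ?thesis .
qed

lemma measurable_H [simp]: "measurable (hausdorff_measure s :: 'a::euclidean_space measure) N = measurable borel N"
  by (rule measurable_cong_sets) simp_all

lemma integral_transfer:
  fixes \<xi> :: "real^'n" and k :: 'n and n :: nat and f :: "real^'n \<Rightarrow> real"
  defines "H \<equiv> hausdorff_measure (real n) :: (real^'n) measure"
  assumes MS: "measure_space UNIV (sets borel) (hausdorff_outer (real n) :: (real^'n) set \<Rightarrow> ennreal)"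
    and n: "n \<ge> 1" and z: "\<bar>z\<bar> < 1" and xi: "\<xi> \<in> sphere 0 1"
    and f: "continuous_on (sphere 0 1) f"
  shows "(\<integral>\<eta>\<in>circ k z \<xi>. f \<eta> \<partial>H) = (\<integral>\<eta>\<in>circ k 0 (gmap k z \<xi>). lam k z \<eta> ^ n * f (hmap k z \<eta>) \<partial>H)"
proof -
  define S where "S = sphere (0::real^'n) 1"
  define C0 where "C0 = circ k 0 (gmap k z \<xi>)"
  define Cz where "Cz = circ k z \<xi>"
  define h where "h = hmap k z"
  define g where "g = (\<lambda>x. indicator C0 x * lam k z x ^ n)"
  define f' where "f' = (\<lambda>x. indicator S x *\<^sub>R f x)"
  have sH: "sets H = sets borel" unfolding H_def by simp
  have hC: "h ` C0 = Cz" unfolding h_def C0_def Cz_def by (rule hmap_circ[OF xi z])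
  have C0S: "C0 \<subseteq> S" unfolding C0_def S_def by (rule circ_sub)
  have CzS: "Cz \<subseteq> S" unfolding Cz_def S_def by (rule circ_sub)
  have [measurable]: "C0 \<in> sets borel" "Cz \<in> sets borel" "S \<in> sets borel"
    unfolding C0_def Cz_def S_def by measurable
  have hm [measurable]: "h \<in> borel_measurable borel" unfolding h_def by measurable
  have f'm [measurable]: "f' \<in> borel_measurable borel"
    unfolding f'_def using f unfolding S_def by (intro borel_measurable_continuous_on_indicator) auto
  have gm [measurable]: "g \<in> borel_measurable borel" unfolding g_def by measurable
  have g0: "0 \<le> g x" for x
    using lam_pos[of x z k] C0S z unfolding g_def S_def by (auto simp: indicator_def)
  define M1 where "M1 = density H (\<lambda>x. ennreal (indicator Cz x))"
  define M2 where "M2 = distr (density H (\<lambda>x. ennreal (g x))) borel h"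
  have M12: "M1 = M2"
  proof (rule measure_eqI)
    show "sets M1 = sets M2" unfolding M1_def M2_def by (simp add: sH)
    fix A assume "A \<in> sets M1"
    then have A [measurable]: "A \<in> sets borel" unfolding M1_def by (simp add: sH)
    have hA [measurable]: "h -` A \<in> sets borel" using hm A by (metis measurable_sets space_borel Int_UNIV_right)
    have "emeasure M1 A = (\<integral>\<^sup>+x. ennreal (indicator Cz x) * indicator A x \<partial>H)"
      unfolding M1_def by (rule emeasure_density) (auto simp: sH H_def)
    also have "\<dots> = (\<integral>\<^sup>+x. indicator (A \<inter> Cz) x \<partial>H)"
      by (rule nn_integral_cong) (auto simp: indicator_def)
    also have "\<dots> = emeasure H (A \<inter> Cz)" by (rule nn_integral_indicator) (simp add: sH)
    also have "A \<inter> Cz = h ` (h -` A \<inter> C0)" using hC by auto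
    also have "emeasure H (h ` (h -` A \<inter> C0)) = emeasure (density H (\<lambda>x. ennreal (lam k z x ^ n))) (h -` A \<inter> C0)"
      unfolding h_def H_def by (rule CV[OF MS n z]) (use C0S S_def h_def in auto)
    also have "\<dots> = (\<integral>\<^sup>+x. ennreal (lam k z x ^ n) * indicator (h -` A \<inter> C0) x \<partial>H)"
      by (rule emeasure_density) (auto simp: sH H_def)
    also have "\<dots> = (\<integral>\<^sup>+x. ennreal (g x) * indicator (h -` A) x \<partial>H)"
      by (rule nn_integral_cong) (auto simp: indicator_def g_def)
    also have "\<dots> = emeasure (density H (\<lambda>x. ennreal (g x))) (h -` A)"
      by (rule emeasure_density[symmetric]) (auto simp: sH H_def)
    also have "\<dots> = emeasure M2 A"
      unfolding M2_def by (subst emeasure_distr) (auto simp: sH H_def)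
    finally show "emeasure M1 A = emeasure M2 A" .
  qed
  have "(\<integral>\<eta>\<in>Cz. f \<eta> \<partial>H) = integral\<^sup>L H (\<lambda>x. indicator Cz x *\<^sub>R f' x)"
    unfolding set_lebesgue_integral_def f'_def using CzS
    by (intro Bochner_Integration.integral_cong) (auto simp: indicator_def)
  also have "\<dots> = integral\<^sup>L M1 f'"
    unfolding M1_def by (rule integral_density[symmetric]) (auto simp: sH H_def)
  also have "\<dots> = integral\<^sup>L M2 f'" by (simp add: M12)
  also have "\<dots> = integral\<^sup>L (density H (\<lambda>x. ennreal (g x))) (\<lambda>x. f' (h x))"
    unfolding M2_def by (rule integral_distr) (auto simp: sH H_def)
  also have "\<dots> = integral\<^sup>L H (\<lambda>x. g x *\<^sub>R f' (h x))"
    by (rule integral_density) (auto simp: sH g0 H_def)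
  also have "\<dots> = (\<integral>\<eta>\<in>C0. lam k z \<eta> ^ n * f (hmap k z \<eta>) \<partial>H)"
    unfolding set_lebesgue_integral_def
  proof (intro Bochner_Integration.integral_cong refl)
    fix x
    show "g x *\<^sub>R f' (h x) = indicator C0 x *\<^sub>R (lam k z x ^ n * f (hmap k z x))"
    proof (cases "x \<in> C0")
      case True
      then have "x \<in> S" using C0S by auto
      then have "h x \<in> S" unfolding h_def S_def by (rule hmap_sphere[OF z])
      then show ?thesis using True unfolding g_def f'_def h_def by simp
    next
      case False
      then show ?thesis unfolding g_def by simp
    qed
  qed
  finally show ?thesis unfolding Cz_def C0_def .
qed

lemma measure_circ:
  fixes \<xi> :: "real^'n" and k :: 'n and n :: nat
  defines "H \<equiv> hausdorff_measure (real n) :: (real^'n) measure"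
  assumes MS: "measure_space UNIV (sets borel) (hausdorff_outer (real n) :: (real^'n) set \<Rightarrow> ennreal)"
    and n: "n \<ge> 1" and z: "\<bar>z\<bar> < 1" and xi: "\<xi> \<in> sphere 0 1"
  shows "measure H (circ k z \<xi>) = sqrt (1 - z^2 * (\<xi> $ k)^2) ^ n * measure H (circ k 0 (gmap k z \<xi>))"
proof -
  define r where "r = sqrt (1 - z^2 * (\<xi> $ k)^2)"
  have r0: "r > 0" unfolding r_def using r_pos[OF xi z, of k] by simp
  have s: "real n > 0" using n by simp
  obtain \<phi> where d: "\<And>x y. dist (\<phi> x) (\<phi> y) = r * dist x y"
    and img: "\<phi> ` circ k 0 (gmap k z \<xi>) = circ k z \<xi>"
    using circ_similar[OF xi z, of k] unfolding r_def by blast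
  have up: "hausdorff_outer (real n) (circ k z \<xi>) \<le> ennreal (r powr real n) * hausdorff_outer (real n) (circ k 0 (gmap k z \<xi>))"
    unfolding img[symmetric] by (rule hausdorff_outer_lip[OF s r0]) (simp add: d)
  have lo: "ennreal (r powr real n) * hausdorff_outer (real n) (circ k 0 (gmap k z \<xi>)) \<le> hausdorff_outer (real n) (circ k z \<xi>)"
    unfolding img[symmetric] by (rule hausdorff_outer_colip[OF s r0]) (simp add: d)
  have "emeasure H (circ k z \<xi>) = ennreal (r ^ n) * emeasure H (circ k 0 (gmap k z \<xi>))"
    unfolding H_def EH[OF MS circ_borel] using antisym[OF up lo] r0 by (simp add: powr_realpow)
  then show ?thesis unfolding measure_def r_def[symmetric] using r0 by (simp add: enn2real_mult)
qed

lemma H_null: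
  assumes "\<not> measure_space UNIV (sets borel) (hausdorff_outer s :: 'a::euclidean_space set \<Rightarrow> ennreal)"
  shows "measure (hausdorff_measure s :: 'a measure) A = 0"
    and "set_lebesgue_integral (hausdorff_measure s :: 'a measure) A F = 0"
proof -
  show "measure (hausdorff_measure s :: 'a measure) A = 0"
    unfolding measure_def using assms by (simp add: emeasure_H_conv)
  have "AE x in (hausdorff_measure s :: 'a measure). False"
    by (rule AE_I[where N=UNIV]) (use assms in \<open>auto simp: emeasure_H_conv\<close>)
  then have "AE x in (hausdorff_measure s :: 'a measure). indicator A x *\<^sub>R F x = 0"
    by (rule AE_mp) simp
  then show "set_lebesgue_integral (hausdorff_measure s :: 'a measure) A F = 0"
    unfolding set_lebesgue_integral_def by (rule integral_eq_zero_AE)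
qed

theorem mainTheorem3:
  fixes k :: "'n::finite" and z :: real and f :: "real^'n \<Rightarrow> real"
  assumes "CARD('n) \<ge> 3"
    and "0 \<le> z" and "z < 1"
    and "continuous_on (sphere 0 1) f"
    and "\<xi> \<in> sphere (0::real^'n) 1"
  shows "sph_transform k z f \<xi> = Nop k z (funk_radon k (Mop k z f)) \<xi>"
proof -
  define n where "n = CARD('n) - 2"
  have n1: "n \<ge> 1" unfolding n_def using assms(1) by simp
  have sn: "real CARD('n) - 2 = real n" unfolding n_def using assms(1) by (simp add: of_nat_diff)
  have z: "\<bar>z\<bar> < 1" using assms(2,3) by simp
  note xi = assms(5)
  define H where "H = (hausdorff_measure (real n) :: (real^'n) measure)"
  define g where "g = gmap k z \<xi>"
  define X where "X = 1 - z^2 * (\<xi> $ k)^2"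
  have X0: "X > 0" unfolding X_def by (rule r_pos[OF xi z])
  have Mf: "Mop k z f = (\<lambda>\<eta>. lam k z \<eta> ^ n * f (hmap k z \<eta>))"
    unfolding Mop_def[abs_def] lam_def n_def by simp
  have lhs: "sph_transform k z f \<xi> = (\<integral>\<eta>\<in>circ k z \<xi>. f \<eta> \<partial>H) / measure H (circ k z \<xi>)"
    unfolding sph_transform_def Let_def sn H_def ..
  have rhs: "Nop k z (funk_radon k (Mop k z f)) \<xi> =
     X powr (- real n / 2) * ((\<integral>\<eta>\<in>circ k 0 g. Mop k z f \<eta> \<partial>H) / measure H (circ k 0 g))"
    unfolding Nop_def funk_radon_def sph_transform_def Let_def sn H_def g_def X_def ..
  show ?thesis
  proof (cases "measure_space UNIV (sets borel) (hausdorff_outer (real n) :: (real^'n) set \<Rightarrow> ennreal)")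
    case False
    show ?thesis unfolding lhs rhs H_def using H_null[OF False] by simp
  next
    case MS: True
    have I: "(\<integral>\<eta>\<in>circ k z \<xi>. f \<eta> \<partial>H) = (\<integral>\<eta>\<in>circ k 0 g. Mop k z f \<eta> \<partial>H)"
      unfolding H_def g_def Mf by (rule integral_transfer[OF MS n1 z xi assms(4)])
    have m: "measure H (circ k z \<xi>) = sqrt X ^ n * measure H (circ k 0 g)"
      unfolding H_def g_def X_def by (rule measure_circ[OF MS n1 z xi])
    have P: "X powr (- real n / 2) = 1 / sqrt X ^ n"
    proof -
      have "X powr (- real n / 2) = 1 / X powr (real n / 2)"
        by (simp add: powr_minus_divide[symmetric])
      also have "X powr (real n / 2) = (X powr (1/2)) powr real n" by (simp add: powr_powr)
      also have "\<dots> = sqrt X ^ n" using X0 by (simp add: powr_half_sqrt powr_realpow)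
      finally show ?thesis .
    qed
    show ?thesis unfolding lhs rhs I m P by simp
  qed
qed

end
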